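(* During the execution of DASH (described in the context) on an initially connected graph, for any node $v$, the quantity $\mathrm{rem}(v)$ does not decrease over any round (a node deletion followed by DASH's healing) in which $v$ is not the deleted node.
   Context: Model: a network is an undirected graph, initially a connected graph $G_0$ on $n$ nodes. In each round an adversary deletes one surviving node $v$ with its incident edges, and then DASH adds edges. $G$ is the current network; $E'$ is the set of healing edges added so far whose endpoints both survive; $G'=(V(G),E')$. $N(u,G)$, $N(u,G')$ are neighbor sets in $G$, $G'$; $\delta(u)=\deg_G(u)-\deg_{G_0}(u)$. DASH: initially every node receives an ID drawn independently and uniformly from $[0,1]$ (its initial ID). When $v$ is deleted (quantities evaluated just before the deletion): partition the nodes of $N(v,G)$ whose current ID differs from that of $v$ into classes of equal current ID; $UN(v,G)$ consists of one node per class, the one with lowest initial ID. Let $S=UN(v,G)\cup N(v,G')$. Order $S$ by increasing $\delta$ and place it in this order into a complete binary tree with $|S|$ positions, filled level by level from the top and left to right; add to the network and to $E'$ the edge between each node of $S$ and the node at its parent position. Then all nodes of the component of $G'$ containing $S$ set their ID to the minimum current ID in $S$. Weights: every node $u$ has weight $w(u)$, initially $1$; when a node $v$ is deleted, $w(v)$ is added to the weight of an arbitrarily chosen node of $N(v,G')$. For a subgraph $H$, $W(H)$ is the sum of the weights of its vertices. For distinct surviving nodes $x,y$, $T(x,y)$ is the connected component of $G'-y$ containing $x$. Define $\mathrm{rem}(v)=\sum_{u\in N(v,G')}W(T(u,v))-\max_{u\in N(v,G')}W(T(u,v))+w(v)$ (the maximum over the empty set being $0$). *)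

theory Defs
  imports Complex_Main
begin

(* Undirected simple graphs: edges are 2-element sets {a,b}. *)

record 'a dstate =
  sV  :: "'a set"          (* surviving nodes V(G) *)
  sE  :: "'a set set"      (* edges of the current network G *)
  sH  :: "'a set set"      (* healing edges E' (both endpoints surviving) *)
  sid :: "'a \<Rightarrow> real"
  sw  :: "'a \<Rightarrow> nat"

definition nbrs :: "'a set set \<Rightarrow> 'a \<Rightarrow> 'a set" where
  "nbrs F u = {y. {u, y} \<in> F \<and> y \<noteq> u}"

definition deg :: "'a set set \<Rightarrow> 'a \<Rightarrow> nat" where
  "deg F u = card (nbrs F u)"

definition edge_rel :: "'a set set \<Rightarrow> ('a \<times> 'a) set" where
  "edge_rel F = {(a, b). {a, b} \<in> F}"

definition simple_graph :: "'a set \<Rightarrow> 'a set set \<Rightarrow> bool" where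
  "simple_graph V E \<longleftrightarrow> (\<forall>e\<in>E. \<exists>a b. a \<noteq> b \<and> a \<in> V \<and> b \<in> V \<and> e = {a, b})"

definition connected_graph :: "'a set \<Rightarrow> 'a set set \<Rightarrow> bool" where
  "connected_graph V E \<longleftrightarrow> V \<noteq> {} \<and> (\<forall>a\<in>V. \<forall>b\<in>V. (a, b) \<in> (edge_rel E)\<^sup>*)"

definition delta :: "'a set set \<Rightarrow> 'a dstate \<Rightarrow> 'a \<Rightarrow> int" where
  "delta E0 s u = int (deg (sE s) u) - int (deg E0 u)"

(* Un_rep(x,G): one node per class of equal current ID among the G-neighbours of x whose
   current ID differs from that of x, namely one with lowest initial ID. *)
definition is_UN :: "('a \<Rightarrow> real) \<Rightarrow> 'a dstate \<Rightarrow> 'a \<Rightarrow> 'a set \<Rightarrow> bool" where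
  "is_UN iid s x Un_rep \<longleftrightarrow>
     Un_rep \<subseteq> nbrs (sE s) x \<and>
     (\<forall>u\<in>Un_rep. sid s u \<noteq> sid s x) \<and>
     (\<forall>u\<in>nbrs (sE s) x. sid s u \<noteq> sid s x \<longrightarrow> (\<exists>!r. r \<in> Un_rep \<and> sid s r = sid s u)) \<and>
     (\<forall>r\<in>Un_rep. \<forall>u\<in>nbrs (sE s) x. sid s u = sid s r \<longrightarrow> iid r \<le> iid u)"

(* Complete binary tree on the list L (positions filled level by level, left to right):
   the node at 0-based position i > 0 is joined to the node at its parent position (i-1) div 2. *)
definition tree_edges :: "'a list \<Rightarrow> 'a set set" where
  "tree_edges L = {{L ! i, L ! ((i - 1) div 2)} | i. 0 < i \<and> i < length L}"

(* One round: the adversary deletes x, then DASH heals. r is the arbitrarily chosen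
   recipient of w(x) among N(x,G') (if that set is nonempty). *)
definition dash_step :: "'a set set \<Rightarrow> ('a \<Rightarrow> real) \<Rightarrow> 'a dstate \<Rightarrow> 'a \<Rightarrow> 'a dstate \<Rightarrow> bool" where
  "dash_step E0 iid s x s' \<longleftrightarrow> x \<in> sV s \<and>
     (\<exists>Un_rep L r.
        is_UN iid s x Un_rep \<and>
        distinct L \<and> set L = Un_rep \<union> nbrs (sH s) x \<and>
        sorted (map (delta E0 s) L) \<and>
        (nbrs (sH s) x \<noteq> {} \<longrightarrow> r \<in> nbrs (sH s) x) \<and>
        (let S = set L;
             H' = {e \<in> sH s. x \<notin> e} \<union> tree_edges L
         in s' = \<lparr> sV = sV s - {x},
                   sE = {e \<in> sE s. x \<notin> e} \<union> tree_edges L,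
                   sH = H',
                   sid = (\<lambda>u. if (\<exists>a\<in>S. (a, u) \<in> (edge_rel H')\<^sup>*)
                              then Min (sid s ` S) else sid s u),
                   sw = (if nbrs (sH s) x = {} then sw s
                         else (sw s)(r := sw s r + sw s x)) \<rparr>))"

definition dash_round :: "'a set set \<Rightarrow> ('a \<Rightarrow> real) \<Rightarrow> 'a dstate \<Rightarrow> 'a dstate \<Rightarrow> bool" where
  "dash_round E0 iid s s' \<longleftrightarrow> (\<exists>x. dash_step E0 iid s x s')"

definition init_state :: "'a set \<Rightarrow> 'a set set \<Rightarrow> ('a \<Rightarrow> real) \<Rightarrow> 'a dstate" where
  "init_state V0 E0 iid = \<lparr> sV = V0, sE = E0, sH = {}, sid = iid, sw = (\<lambda>_. 1) \<rparr>"

(* T(u,v): vertex set of the component of G' - v containing u *)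
definition T_comp :: "'a dstate \<Rightarrow> 'a \<Rightarrow> 'a \<Rightarrow> 'a set" where
  "T_comp s u v = {y. (u, y) \<in> {(a, b). {a, b} \<in> sH s \<and> a \<noteq> v \<and> b \<noteq> v}\<^sup>*}"

definition Wt :: "'a dstate \<Rightarrow> 'a set \<Rightarrow> nat" where
  "Wt s A = (\<Sum>y\<in>A. sw s y)"

definition rem :: "'a dstate \<Rightarrow> 'a \<Rightarrow> nat" where
  "rem s v = (\<Sum>u\<in>nbrs (sH s) v. Wt s (T_comp s u v))
             - Max (insert 0 ((\<lambda>u. Wt s (T_comp s u v)) ` nbrs (sH s) v))
             + sw s v"

end

theory Submission
  imports Defs
begin

definition Rel :: "'a set set \<Rightarrow> ('a \<Rightarrow> bool) \<Rightarrow> ('a \<times> 'a) set" where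
  "Rel E P = {(a,b). {a,b} \<in> E \<and> P a \<and> P b}"

definition ACY :: "'a set set \<Rightarrow> bool" where
  "ACY H \<longleftrightarrow> (\<forall>a b. {a,b} \<in> H \<longrightarrow> (a,b) \<notin> (edge_rel (H - {{a,b}}))\<^sup>*)"

lemma Rel_sym: "(a,b) \<in> (Rel E P)\<^sup>* \<Longrightarrow> (b,a) \<in> (Rel E P)\<^sup>*"
proof -
  have "sym (Rel E P)" by (auto simp: sym_def Rel_def insert_commute)
  hence "sym ((Rel E P)\<^sup>*)" by (rule sym_rtrancl)
  thus "(a,b) \<in> (Rel E P)\<^sup>* \<Longrightarrow> (b,a) \<in> (Rel E P)\<^sup>*" by (auto dest: symD)
qed

lemma edge_rel_Rel: "edge_rel F = Rel F (\<lambda>_. True)"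
  by (auto simp: edge_rel_def Rel_def)

lemma Rel_mono: "E \<subseteq> E' \<Longrightarrow> (\<And>a. P a \<Longrightarrow> P' a) \<Longrightarrow> (a,b) \<in> (Rel E P)\<^sup>* \<Longrightarrow> (a,b) \<in> (Rel E' P')\<^sup>*"
proof -
  assume "E \<subseteq> E'" "\<And>a. P a \<Longrightarrow> P' a"
  hence "Rel E P \<subseteq> Rel E' P'" by (auto simp: Rel_def)
  thus "(a,b) \<in> (Rel E P)\<^sup>* \<Longrightarrow> (a,b) \<in> (Rel E' P')\<^sup>*" using rtrancl_mono by blast
qed

lemma Rel_mono2: "(a,b) \<in> (Rel E P)\<^sup>* \<Longrightarrow> E \<subseteq> E' \<Longrightarrow> (\<And>a. P a \<Longrightarrow> P' a) \<Longrightarrow> (a,b) \<in> (Rel E' P')\<^sup>*"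
  using Rel_mono by metis

lemma Rel_end: "(a,b) \<in> (Rel E P)\<^sup>* \<Longrightarrow> b = a \<or> P b"
  by (induction rule: rtrancl_induct) (auto simp: Rel_def)

lemma first_hit_aux:
  assumes "(a,c) \<in> (Rel E P)\<^sup>*" "a \<noteq> t"
  shows "(a,c) \<in> (Rel E (\<lambda>y. P y \<and> y \<noteq> t))\<^sup>* \<or>
         (\<exists>k. {k,t} \<in> E \<and> P k \<and> P t \<and> k \<noteq> t \<and> (a,k) \<in> (Rel E (\<lambda>y. P y \<and> y \<noteq> t))\<^sup>*)"
  using assms(1)
proof (induction rule: rtrancl_induct)
  case base show ?case by simp
next
  case (step b c)
  let ?R = "Rel E (\<lambda>y. P y \<and> y \<noteq> t)"
  have e: "{b,c} \<in> E" "P b" "P c" using step(2) by (auto simp: Rel_def)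
  consider (A) "(a,b) \<in> ?R\<^sup>*" | (B) "\<exists>k. {k,t} \<in> E \<and> P k \<and> P t \<and> k \<noteq> t \<and> (a,k) \<in> ?R\<^sup>*"
    using step(3) by blast
  then show ?case
  proof cases
    case A
    have "b = a \<or> (P b \<and> b \<noteq> t)" using Rel_end[OF A] by simp
    hence bt: "b \<noteq> t" using assms(2) by blast
    show ?thesis
    proof (cases "c = t")
      case True
      hence "{b,t} \<in> E \<and> P b \<and> P t \<and> b \<noteq> t \<and> (a,b) \<in> ?R\<^sup>*"
        using e bt A by simp
      thus ?thesis by blast
    next
      case False
      hence "(b,c) \<in> ?R" using e bt by (simp add: Rel_def)
      hence "(a,c) \<in> ?R\<^sup>*" by (rule rtrancl_into_rtrancl[OF A])
      thus ?thesis by (rule disjI1)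
    qed
  next
    case B thus ?thesis by (rule disjI2)
  qed
qed

lemma first_hit:
  assumes "(a,t) \<in> (Rel E P)\<^sup>*" "a \<noteq> t"
  shows "\<exists>k. {k,t} \<in> E \<and> P k \<and> P t \<and> k \<noteq> t \<and> (a,k) \<in> (Rel E (\<lambda>y. P y \<and> y \<noteq> t))\<^sup>*"
proof -
  have "(a,t) \<notin> (Rel E (\<lambda>y. P y \<and> y \<noteq> t))\<^sup>*"
  proof
    assume "(a,t) \<in> (Rel E (\<lambda>y. P y \<and> y \<noteq> t))\<^sup>*"
    from Rel_end[OF this] assms(2) show False by simp
  qed
  thus ?thesis using first_hit_aux[OF assms] by simp
qed

lemma closed_reach:
  assumes "(a,b) \<in> R\<^sup>*" "a \<in> Z" "\<And>y y'. (y,y') \<in> R \<Longrightarrow> y \<in> Z \<Longrightarrow> y' \<in> Z"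
  shows "b \<in> Z"
  using assms(1) by (induction rule: rtrancl_induct) (use assms in auto)

lemma path_const:
  assumes "\<forall>a b. {a,b} \<in> H \<longrightarrow> f a = f b" "(a,b) \<in> (Rel H P)\<^sup>*"
  shows "f a = f b"
  using assms(2) by (induction rule: rtrancl_induct) (use assms(1) in \<open>auto simp: Rel_def\<close>)

lemma T_comp_eq: "T_comp s u v = {y. (u,y) \<in> (Rel (sH s) (\<lambda>a. a \<noteq> v))\<^sup>*}"
  by (simp add: T_comp_def Rel_def)

lemma reach_subset: "(u,y) \<in> (Rel E P)\<^sup>* \<Longrightarrow> y = u \<or> y \<in> \<Union>E"
  by (induction rule: rtrancl_induct) (auto simp: Rel_def)

lemma ACY_noloop: "ACY H \<Longrightarrow> {a,b} \<in> H \<Longrightarrow> a \<noteq> b"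
  by (auto simp: ACY_def)

lemma FOR:
  assumes "ACY H" "{v,u1} \<in> H" "{v,u2} \<in> H" "(u1,u2) \<in> (Rel H (\<lambda>a. a\<noteq>v))\<^sup>*"
  shows "u1 = u2"
proof (rule ccontr)
  assume ne: "u1 \<noteq> u2"
  let ?H = "H - {{v,u1}}"
  have 1: "(u2,u1) \<in> (Rel H (\<lambda>a. a\<noteq>v))\<^sup>*" using Rel_sym[OF assms(4)] .
  have 2: "Rel H (\<lambda>a. a\<noteq>v) \<subseteq> edge_rel ?H"
  proof
    fix p assume "p \<in> Rel H (\<lambda>a. a\<noteq>v)"
    then obtain a b where p: "p = (a,b)" "{a,b} \<in> H" "a \<noteq> v" "b \<noteq> v" unfolding Rel_def by blast
    have "v \<notin> {a,b}" using p by simp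
    hence "{a,b} \<noteq> {v,u1}" by blast
    thus "p \<in> edge_rel ?H" using p unfolding edge_rel_def by simp
  qed
  have 3: "(u2,u1) \<in> (edge_rel ?H)\<^sup>*" using rtrancl_mono[OF 2] 1 by (rule subsetD)
  have "{v,u2} \<noteq> {v,u1}" using ne by (auto simp: doubleton_eq_iff)
  hence 4: "(v,u2) \<in> edge_rel ?H" using assms(3) unfolding edge_rel_def by simp
  have "(v,u1) \<in> (edge_rel ?H)\<^sup>*" by (rule converse_rtrancl_into_rtrancl[OF 4 3])
  moreover have "(v,u1) \<notin> (edge_rel ?H)\<^sup>*" using assms(1,2) unfolding ACY_def by blast
  ultimately show False by contradiction
qed


lemma er_sym: "(a,b) \<in> (edge_rel F)\<^sup>* \<Longrightarrow> (b,a) \<in> (edge_rel F)\<^sup>*"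
  unfolding edge_rel_Rel by (rule Rel_sym)

lemma er_mono: "F \<subseteq> F' \<Longrightarrow> (a,b) \<in> (edge_rel F)\<^sup>* \<Longrightarrow> (a,b) \<in> (edge_rel F')\<^sup>*"
  unfolding edge_rel_Rel by (rule Rel_mono) auto

lemma edge_relD: "(a,b) \<in> edge_rel F \<Longrightarrow> {a,b} \<in> F"
  by (simp add: edge_rel_def)

lemma er_step: "(a,b) \<in> (edge_rel F)\<^sup>* \<Longrightarrow> {b,c} \<in> F \<Longrightarrow> (a,c) \<in> (edge_rel F)\<^sup>*"
  by (rule rtrancl_into_rtrancl) (auto simp: edge_rel_def)

lemma Rel_er: "(a,b) \<in> (Rel F P)\<^sup>* \<Longrightarrow> (a,b) \<in> (edge_rel F)\<^sup>*"
  unfolding edge_rel_Rel by (rule Rel_mono) auto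

lemma tree_mem: "e \<in> tree_edges L \<Longrightarrow> \<exists>i. 0<i \<and> i<length L \<and> e = {L!i, L!((i-1) div 2)}"
  by (auto simp: tree_edges_def)

lemma tree_memI: "0<i \<Longrightarrow> i<length L \<Longrightarrow> {L!i, L!((i-1) div 2)} \<in> tree_edges L"
  by (auto simp: tree_edges_def)

lemma finite_tree: "finite (tree_edges L)"
proof -
  have "tree_edges L = (\<lambda>i. {L!i, L!((i-1) div 2)}) ` {i. 0<i \<and> i<length L}"
    by (auto simp: tree_edges_def)
  thus ?thesis by simp
qed

lemma par_less: "0 < (i::nat) \<Longrightarrow> (i-1) div 2 < i" by simp

lemma tree_sub: "{a,b} \<in> tree_edges L \<Longrightarrow> a \<in> set L \<and> b \<in> set L"
proof -
  assume "{a,b} \<in> tree_edges L"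
  then obtain i where i: "0<i" "i<length L" "{a,b} = {L!i, L!((i-1) div 2)}" using tree_mem by blast
  have "(i-1) div 2 < length L" using i by simp
  hence "L!i \<in> set L" "L!((i-1) div 2) \<in> set L" using i by auto
  moreover have "a \<in> {L!i, L!((i-1) div 2)}" "b \<in> {L!i, L!((i-1) div 2)}" using i(3) by (metis insertI1 insert_commute)+
  ultimately show ?thesis by auto
qed

lemma tree_noloop: "distinct L \<Longrightarrow> {a,b} \<in> tree_edges L \<Longrightarrow> a \<noteq> b"
proof -
  assume d: "distinct L" and "{a,b} \<in> tree_edges L"
  then obtain i where i: "0<i" "i<length L" "{a,b} = {L!i, L!((i-1) div 2)}" using tree_mem by blast
  have "L!i \<noteq> L!((i-1) div 2)" using d i by (simp add: nth_eq_iff_index_eq)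
  thus ?thesis using i(3) by (auto simp: doubleton_eq_iff)
qed

lemma tree_conn0: "i < length L \<Longrightarrow> (L!0, L!i) \<in> (edge_rel (tree_edges L))\<^sup>*"
proof (induction i rule: less_induct)
  case (less i)
  show ?case
  proof (cases "i = 0")
    case True thus ?thesis by simp
  next
    case False
    hence p: "(i-1) div 2 < i" by simp
    hence "(L!0, L!((i-1) div 2)) \<in> (edge_rel (tree_edges L))\<^sup>*" using less by simp
    moreover have "{L!((i-1) div 2), L!i} \<in> tree_edges L"
      using tree_memI[of i L] False less(2) by (simp add: insert_commute)
    ultimately show ?thesis by (rule er_step)
  qed
qed

lemma tree_conn: "a \<in> set L \<Longrightarrow> b \<in> set L \<Longrightarrow> (a,b) \<in> (edge_rel (tree_edges L))\<^sup>*"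
proof -
  assume "a \<in> set L" "b \<in> set L"
  then obtain i j where ij: "i < length L" "j < length L" "a = L!i" "b = L!j" by (metis in_set_conv_nth)
  have "(L!0, a) \<in> (edge_rel (tree_edges L))\<^sup>*" using tree_conn0[OF ij(1)] ij(3) by simp
  hence "(a, L!0) \<in> (edge_rel (tree_edges L))\<^sup>*" by (rule er_sym)
  moreover have "(L!0, b) \<in> (edge_rel (tree_edges L))\<^sup>*" using tree_conn0[OF ij(2)] ij(4) by simp
  ultimately show ?thesis by (rule rtrancl_trans)
qed


lemma funpow_par_le: "((\<lambda>k::nat. (k-1) div 2) ^^ n) k \<le> k"
proof (induction n)
  case 0 thus ?case by simp
next
  case (Suc n)
  have "((\<lambda>k::nat. (k-1) div 2) ^^ Suc n) k = (((\<lambda>k::nat. (k-1) div 2) ^^ n) k - 1) div 2" by simp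
  also have "\<dots> \<le> ((\<lambda>k::nat. (k-1) div 2) ^^ n) k" by simp
  finally show ?case using Suc by linarith
qed

definition sepL :: "'a set set \<Rightarrow> 'a list \<Rightarrow> bool" where
  "sepL G L \<longleftrightarrow> (\<forall>p q. p \<in> set L \<longrightarrow> q \<in> set L \<longrightarrow> (p,q) \<in> (edge_rel G)\<^sup>* \<longrightarrow> p = q)"

lemma tree_cut:
  assumes d: "distinct L" and i: "0<i" "i<length L" and sep: "sepL G L"
  shows "(L!i, L!((i-1) div 2)) \<notin> (edge_rel (G \<union> (tree_edges L - {{L!i, L!((i-1) div 2)}})))\<^sup>*"
proof
  define f where "f = (\<lambda>k::nat. (k-1) div 2)"
  define D where "D = {j. \<exists>n. (f^^n) j = i}"
  define Z where "Z = {y. \<exists>j. j \<in> D \<and> j < length L \<and> (L!j, y) \<in> (edge_rel G)\<^sup>*}"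
  let ?e = "{L!i, L!((i-1) div 2)}"
  assume path: "(L!i, L!((i-1) div 2)) \<in> (edge_rel (G \<union> (tree_edges L - {?e})))\<^sup>*"
  have fi: "f i < i" "f i < length L" using i by (auto simp: f_def)
  have "(f^^0) i = i" by simp
  hence iD: "i \<in> D" unfolding D_def by blast
  have "L!i \<in> Z" unfolding Z_def using iD i by blast
  moreover have "\<And>y y'. (y,y') \<in> edge_rel (G \<union> (tree_edges L - {?e})) \<Longrightarrow> y \<in> Z \<Longrightarrow> y' \<in> Z"
  proof -
    fix y y' assume st: "(y,y') \<in> edge_rel (G \<union> (tree_edges L - {?e}))" and yZ: "y \<in> Z"
    then obtain j where j: "j \<in> D" "j < length L" "(L!j, y) \<in> (edge_rel G)\<^sup>*" unfolding Z_def by blast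
    have "{y,y'} \<in> G \<or> {y,y'} \<in> tree_edges L - {?e}" using st unfolding edge_rel_def by simp
    thus "y' \<in> Z"
    proof
      assume "{y,y'} \<in> G"
      hence "(L!j, y') \<in> (edge_rel G)\<^sup>*" using j(3) er_step by metis
      thus ?thesis unfolding Z_def using j(1,2) by blast
    next
      assume te: "{y,y'} \<in> tree_edges L - {?e}"
      hence "{y,y'} \<in> tree_edges L" by (rule DiffD1)
      hence "y \<in> set L \<and> y' \<in> set L" by (rule tree_sub)
      hence yy: "y \<in> set L" "y' \<in> set L" by auto
      have "L!j \<in> set L" using j(2) by simp
      hence yj: "L!j = y" using sep yy j(3) unfolding sepL_def by blast
      obtain m where m: "0<m" "m<length L" "{y,y'} = {L!m, L!((m-1) div 2)}" using te tree_mem by blast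
      have mi: "m \<noteq> i" using te m(3) by auto
      have fm: "f m < length L" "f m < m" using m by (auto simp: f_def)
      have "(y = L!m \<and> y' = L!(f m)) \<or> (y = L!(f m) \<and> y' = L!m)" using m(3) unfolding f_def by (simp add: doubleton_eq_iff)
      thus ?thesis
      proof
        assume c: "y = L!m \<and> y' = L!(f m)"
        hence "j = m" using yj j(2) m(2) d by (simp add: nth_eq_iff_index_eq)
        then obtain n where n: "(f^^n) m = i" using j(1) unfolding D_def by blast
        then obtain n' where "n = Suc n'" using mi by (cases n) auto
        hence "(f^^n') (f m) = i" using n by (simp add: funpow_Suc_right del: funpow.simps)
        hence "f m \<in> D" unfolding D_def by blast
        thus ?thesis unfolding Z_def using c fm(1) by blast
      next
        assume c: "y = L!(f m) \<and> y' = L!m"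
        hence "j = f m" using yj j(2) fm(1) d by (simp add: nth_eq_iff_index_eq)
        then obtain n where n: "(f^^n) (f m) = i" using j(1) unfolding D_def by blast
        hence "(f^^(Suc n)) m = i" by (simp add: funpow_Suc_right del: funpow.simps)
        hence "m \<in> D" unfolding D_def by blast
        thus ?thesis unfolding Z_def using c m(2) by blast
      qed
    qed
  qed
  ultimately have "L!((i-1) div 2) \<in> Z" using closed_reach[OF path] by blast
  then obtain j where j: "j \<in> D" "j < length L" "(L!j, L!(f i)) \<in> (edge_rel G)\<^sup>*" unfolding Z_def f_def by blast
  have "L!j = L!(f i)" using sep j(3) j(2) fi(2) unfolding sepL_def by simp
  hence "j = f i" using d j(2) fi(2) by (simp add: nth_eq_iff_index_eq)
  then obtain n where "(f^^n) (f i) = i" using j(1) unfolding D_def by blast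
  moreover have "(f^^n) (f i) \<le> f i" unfolding f_def by (rule funpow_par_le)
  ultimately show False using fi(1) by simp
qed


lemma ACY_mono: "ACY G \<Longrightarrow> G' \<subseteq> G \<Longrightarrow> ACY G'"
  unfolding ACY_def
proof (intro allI impI notI)
  fix a b assume A: "\<forall>a b. {a, b} \<in> G \<longrightarrow> (a, b) \<notin> (edge_rel (G - {{a, b}}))\<^sup>*"
    and sub: "G' \<subseteq> G" and e: "{a,b} \<in> G'" and p: "(a, b) \<in> (edge_rel (G' - {{a, b}}))\<^sup>*"
  have "G' - {{a,b}} \<subseteq> G - {{a,b}}" using sub by (rule Diff_mono) simp
  hence "(a, b) \<in> (edge_rel (G - {{a, b}}))\<^sup>*" using p by (rule er_mono)
  moreover have "{a,b} \<in> G" using sub e by (rule subsetD)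
  ultimately show False using A by simp
qed

lemma ACY_pres:
  assumes A: "ACY G" and d: "distinct L" and sep: "sepL G L"
  shows "ACY (G \<union> tree_edges L)"
  unfolding ACY_def
proof (intro allI impI notI)
  fix a b
  let ?T = "tree_edges L"
  assume e: "{a,b} \<in> G \<union> ?T" and path: "(a,b) \<in> (edge_rel ((G \<union> ?T) - {{a,b}}))\<^sup>*"
  show False
  proof (cases "{a,b} \<in> G")
    case True
    have ab: "a \<noteq> b" using ACY_noloop[OF A True] .
    have nt: "{a,b} \<notin> ?T"
    proof
      assume "{a,b} \<in> ?T"
      hence "a \<in> set L \<and> b \<in> set L" by (rule tree_sub)
      moreover have "(a,b) \<in> (edge_rel G)\<^sup>*" using True unfolding edge_rel_def by auto
      ultimately show False using sep ab unfolding sepL_def by blast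
    qed
    have eq: "(G \<union> ?T) - {{a,b}} = (G - {{a,b}}) \<union> ?T"
    proof (rule set_eqI)
      fix z show "z \<in> (G \<union> ?T) - {{a,b}} \<longleftrightarrow> z \<in> (G - {{a,b}}) \<union> ?T"
        using nt by (cases "z = {a,b}") auto
    qed
    define X where "X = {y. (a,y) \<in> (edge_rel G)\<^sup>*}"
    define Ca where "Ca = {y. (a,y) \<in> (edge_rel (G - {{a,b}}))\<^sup>*}"
    define Z where "Z = Ca \<union> {y. y \<notin> X \<and> (\<exists>c\<in>Ca. c \<in> set L)}"
    have CaX: "Ca \<subseteq> X" unfolding Ca_def X_def using er_mono[of "G - {{a,b}}" G] by blast
    have "a \<in> Z" unfolding Z_def Ca_def by simp
    moreover have "\<And>y y'. (y,y') \<in> edge_rel ((G - {{a,b}}) \<union> ?T) \<Longrightarrow> y \<in> Z \<Longrightarrow> y' \<in> Z"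
    proof -
      fix y y' assume st: "(y,y') \<in> edge_rel ((G - {{a,b}}) \<union> ?T)" and yZ: "y \<in> Z"
      have "{y,y'} \<in> (G - {{a,b}}) \<union> ?T" using st by (rule edge_relD)
      thus "y' \<in> Z"
      proof (rule UnE)
        assume g: "{y,y'} \<in> G - {{a,b}}"
        hence g2: "{y,y'} \<in> G" by (rule DiffD1)
        show ?thesis
        proof (cases "y \<in> Ca")
          case True
          hence "(a,y) \<in> (edge_rel (G - {{a,b}}))\<^sup>*" unfolding Ca_def by simp
          hence "(a,y') \<in> (edge_rel (G - {{a,b}}))\<^sup>*" using g by (rule er_step)
          thus ?thesis unfolding Z_def Ca_def by blast
        next
          case False
          hence yX: "y \<notin> X" and c: "\<exists>c\<in>Ca. c \<in> set L" using yZ unfolding Z_def by auto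
          have "y' \<notin> X"
          proof
            assume "y' \<in> X"
            moreover have "{y',y} \<in> G" using g2 by (simp add: insert_commute)
            ultimately have "(a,y) \<in> (edge_rel G)\<^sup>*" unfolding X_def by (simp add: er_step)
            hence "y \<in> X" unfolding X_def by simp
            thus False using yX by blast
          qed
          thus ?thesis unfolding Z_def using c by blast
        qed
      next
        assume "{y,y'} \<in> ?T"
        hence yy: "y \<in> set L \<and> y' \<in> set L" by (rule tree_sub)
        show ?thesis
        proof (cases "y \<in> Ca")
          case True
          show ?thesis
          proof (cases "y' \<in> X")
            case yX: True
            have "(a,y) \<in> (edge_rel G)\<^sup>*" using True CaX unfolding X_def by blast
            hence "(y,a) \<in> (edge_rel G)\<^sup>*" by (rule er_sym)
            moreover have "(a,y') \<in> (edge_rel G)\<^sup>*" using yX unfolding X_def by blast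
            ultimately have "(y,y') \<in> (edge_rel G)\<^sup>*" by (rule rtrancl_trans)
            hence "y = y'" using sep yy unfolding sepL_def by blast
            thus ?thesis using True unfolding Z_def by blast
          next
            case False
            thus ?thesis using True yy unfolding Z_def by blast
          qed
        next
          case False
          hence yX: "y \<notin> X" and c: "\<exists>c\<in>Ca. c \<in> set L" using yZ unfolding Z_def by auto
          then obtain c where c: "c \<in> Ca" "c \<in> set L" by blast
          show ?thesis
          proof (cases "y' \<in> X")
            case yX': True
            have "(a,c) \<in> (edge_rel G)\<^sup>*" using c CaX unfolding X_def by blast
            hence "(c,a) \<in> (edge_rel G)\<^sup>*" by (rule er_sym)
            moreover have "(a,y') \<in> (edge_rel G)\<^sup>*" using yX' unfolding X_def by blast
            ultimately have "(c,y') \<in> (edge_rel G)\<^sup>*" by (rule rtrancl_trans)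
            hence "c = y'" using sep yy c unfolding sepL_def by blast
            thus ?thesis using c unfolding Z_def by blast
          next
            case False
            thus ?thesis using c unfolding Z_def by blast
          qed
        qed
      qed
    qed
    moreover have "(a,b) \<in> (edge_rel ((G - {{a,b}}) \<union> ?T))\<^sup>*" using path unfolding eq .
    ultimately have "b \<in> Z" using closed_reach[of a b] by blast
    moreover have "b \<notin> Ca" using A[unfolded ACY_def, rule_format, OF True] unfolding Ca_def by simp
    moreover have "b \<in> X" using True unfolding X_def edge_rel_def by auto
    ultimately show False unfolding Z_def by blast
  next
    case False
    hence te: "{a,b} \<in> ?T" using e by (simp only: Un_iff) simp
    then obtain i where i: "0<i" "i<length L" "{a,b} = {L!i, L!((i-1) div 2)}" using tree_mem by blast
    have eq: "(G \<union> ?T) - {{a,b}} = G \<union> (?T - {{L!i, L!((i-1) div 2)}})"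
    proof (rule set_eqI)
      fix z show "z \<in> (G \<union> ?T) - {{a,b}} \<longleftrightarrow> z \<in> G \<union> (?T - {{L!i, L!((i-1) div 2)}})"
        using False i(3) by (cases "z = {a,b}") auto
    qed
    have cut: "(L!i, L!((i-1) div 2)) \<notin> (edge_rel (G \<union> (?T - {{L!i, L!((i-1) div 2)}})))\<^sup>*"
      by (rule tree_cut[OF d i(1,2) sep])
    have dj: "(a = L!i \<and> b = L!((i-1) div 2)) \<or> (a = L!((i-1) div 2) \<and> b = L!i)"
      using i(3) by (simp add: doubleton_eq_iff)
    have p2: "(a,b) \<in> (edge_rel (G \<union> (?T - {{L!i, L!((i-1) div 2)}})))\<^sup>*" using path unfolding eq .
    from dj show False
    proof (elim disjE conjE)
      assume ca: "a = L!i" and cb: "b = L!((i-1) div 2)"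
      from p2 have "(L!i, L!((i-1) div 2)) \<in> (edge_rel (G \<union> (?T - {{L!i, L!((i-1) div 2)}})))\<^sup>*"
        by (simp only: ca cb)
      thus False using cut by contradiction
    next
      assume ca: "a = L!((i-1) div 2)" and cb: "b = L!i"
      from er_sym[OF p2] have "(L!i, L!((i-1) div 2)) \<in> (edge_rel (G \<union> (?T - {{L!i, L!((i-1) div 2)}})))\<^sup>*"
        by (simp only: ca cb)
      thus False using cut by contradiction
    qed
  qed
qed


definition dinv :: "'a dstate \<Rightarrow> bool" where
  "dinv s \<longleftrightarrow> finite (sH s) \<and> (\<forall>e\<in>sH s. finite e) \<and> ACY (sH s) \<and>
     (\<forall>a b. {a,b} \<in> sH s \<longrightarrow> sid s a = sid s b)"

lemma step_unpack:
  assumes "dash_step E0 iid s x s'"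
  obtains U L r where "is_UN iid s x U" "distinct L" "set L = U \<union> nbrs (sH s) x"
    "nbrs (sH s) x \<noteq> {} \<longrightarrow> r \<in> nbrs (sH s) x"
    "sH s' = {e \<in> sH s. x \<notin> e} \<union> tree_edges L"
    "sid s' = (\<lambda>u. if (\<exists>a\<in>set L. (a, u) \<in> (edge_rel ({e \<in> sH s. x \<notin> e} \<union> tree_edges L))\<^sup>*)
                              then Min (sid s ` set L) else sid s u)"
    "sw s' = (if nbrs (sH s) x = {} then sw s else (sw s)(r := sw s r + sw s x))"
proof -
  from assms obtain U L r where
    "is_UN iid s x U" "distinct L" "set L = U \<union> nbrs (sH s) x"
    "nbrs (sH s) x \<noteq> {} \<longrightarrow> r \<in> nbrs (sH s) x"
    and s': "s' = \<lparr> sV = sV s - {x},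
                   sE = {e \<in> sE s. x \<notin> e} \<union> tree_edges L,
                   sH = {e \<in> sH s. x \<notin> e} \<union> tree_edges L,
                   sid = (\<lambda>u. if (\<exists>a\<in>set L. (a, u) \<in> (edge_rel ({e \<in> sH s. x \<notin> e} \<union> tree_edges L))\<^sup>*)
                              then Min (sid s ` set L) else sid s u),
                   sw = (if nbrs (sH s) x = {} then sw s
                         else (sw s)(r := sw s r + sw s x)) \<rparr>"
    unfolding dash_step_def Let_def by blast
  have h1: "sH s' = {e \<in> sH s. x \<notin> e} \<union> tree_edges L" unfolding s' by simp
  have h2: "sid s' = (\<lambda>u. if (\<exists>a\<in>set L. (a, u) \<in> (edge_rel ({e \<in> sH s. x \<notin> e} \<union> tree_edges L))\<^sup>*)
                              then Min (sid s ` set L) else sid s u)" unfolding s' by simp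
  have h3: "sw s' = (if nbrs (sH s) x = {} then sw s else (sw s)(r := sw s r + sw s x))" unfolding s' by simp
  show ?thesis by (rule that; fact)
qed

lemma nbrs_iff: "y \<in> nbrs F u \<longleftrightarrow> {u,y} \<in> F \<and> y \<noteq> u"
  by (simp add: nbrs_def)

lemma er_const:
  assumes "\<forall>a b. {a,b} \<in> H \<longrightarrow> f a = f b" "(a,b) \<in> (edge_rel H)\<^sup>*"
  shows "f a = f b"
  using path_const[OF assms(1)] assms(2) unfolding edge_rel_Rel by blast

lemma sep_lemma:
  assumes inv: "dinv s" and U: "is_UN iid s x U" and L0: "set L = U \<union> nbrs (sH s) x"
  shows "sepL {e \<in> sH s. x \<notin> e} L"
  unfolding sepL_def
proof (intro allI impI)
  fix p q
  define H where "H = sH s"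
  have L: "set L = U \<union> nbrs H x" using L0 unfolding H_def .
  define H0 where "H0 = {e \<in> H. x \<notin> e}"
  assume p: "p \<in> set L" and q: "q \<in> set L" and pq0: "(p,q) \<in> (edge_rel {e \<in> sH s. x \<notin> e})\<^sup>*"
  have pq: "(p,q) \<in> (edge_rel H0)\<^sup>*" using pq0 unfolding H0_def H_def .
  have A: "ACY H" and I: "\<forall>a b. {a,b} \<in> H \<longrightarrow> sid s a = sid s b" using inv unfolding dinv_def H_def by auto
  have sub: "H0 \<subseteq> H" unfolding H0_def by blast
  have "(p,q) \<in> (edge_rel H)\<^sup>*" using sub pq by (rule er_mono)
  hence sidpq: "sid s p = sid s q" using er_const[OF I] by blast
  have Usid: "\<And>u. u \<in> U \<Longrightarrow> sid s u \<noteq> sid s x" using U unfolding is_UN_def by blast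
  have Nsid: "\<And>u. u \<in> nbrs H x \<Longrightarrow> sid s u = sid s x"
  proof -
    fix u assume "u \<in> nbrs H x"
    hence "{x,u} \<in> H" by (simp add: nbrs_iff)
    thus "sid s u = sid s x" using I by metis
  qed
  have uniq: "\<And>u u'. u \<in> U \<Longrightarrow> u' \<in> U \<Longrightarrow> sid s u = sid s u' \<Longrightarrow> u = u'"
  proof -
    fix u u' assume u: "u \<in> U" "u' \<in> U" "sid s u = sid s u'"
    have "u \<in> nbrs (sE s) x" using U u(1) unfolding is_UN_def by blast
    moreover have "sid s u \<noteq> sid s x" using Usid u(1) .
    ultimately have "\<exists>!r. r \<in> U \<and> sid s r = sid s u" using U unfolding is_UN_def by blast
    thus "u = u'" using u by metis
  qed
  show "p = q"
  proof (cases "p \<in> U \<or> q \<in> U")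
    case True
    have "p \<in> U \<and> q \<in> U"
    proof (cases "p \<in> U")
      case True
      have "q \<in> U"
      proof (rule ccontr)
        assume "q \<notin> U" hence "q \<in> nbrs H x" using q L by blast
        thus False using Nsid Usid True sidpq by metis
      qed
      thus ?thesis using True by blast
    next
      case False
      hence qU: "q \<in> U" using \<open>p \<in> U \<or> q \<in> U\<close> by blast
      have "p \<in> nbrs H x" using p L False by blast
      thus ?thesis using Nsid Usid qU sidpq by metis
    qed
    thus ?thesis using uniq sidpq by blast
  next
    case False
    hence pn: "p \<in> nbrs H x" and qn: "q \<in> nbrs H x" using p q L by blast+
    show "p = q"
    proof (rule ccontr)
      assume ne: "p \<noteq> q"
      have ep: "{x,p} \<in> H" "p \<noteq> x" using pn by (simp_all add: nbrs_iff)
      have eq: "{x,q} \<in> H" "q \<noteq> x" using qn by (simp_all add: nbrs_iff)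
      let ?K = "H - {{x,p}}"
      have "{x,q} \<noteq> {x,p}" using ne eq(2) by (simp add: doubleton_eq_iff)
      hence "{x,q} \<in> ?K" using eq(1) by simp
      hence 1: "(x,q) \<in> edge_rel ?K" by (simp add: edge_rel_def)
      have K0: "H0 \<subseteq> ?K"
      proof
        fix e assume "e \<in> H0"
        hence "e \<in> H" "x \<notin> e" unfolding H0_def by auto
        moreover have "e \<noteq> {x,p}" using \<open>x \<notin> e\<close> by blast
        ultimately show "e \<in> ?K" by simp
      qed
      have "(q,p) \<in> (edge_rel H0)\<^sup>*" using pq by (rule er_sym)
      hence "(q,p) \<in> (edge_rel ?K)\<^sup>*" by (rule er_mono[OF K0])
      hence "(x,p) \<in> (edge_rel ?K)\<^sup>*" by (rule converse_rtrancl_into_rtrancl[OF 1])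
      thus False using A[unfolded ACY_def, rule_format, OF ep(1)] by contradiction
    qed
  qed
qed


lemma dinv_step:
  assumes inv: "dinv s" and st: "dash_step E0 iid s x s'"
  shows "dinv s'"
proof -
  obtain U L r where U: "is_UN iid s x U" and d: "distinct L" and L: "set L = U \<union> nbrs (sH s) x"
    and "nbrs (sH s) x \<noteq> {} \<longrightarrow> r \<in> nbrs (sH s) x"
    and H': "sH s' = {e \<in> sH s. x \<notin> e} \<union> tree_edges L"
    and I': "sid s' = (\<lambda>u. if (\<exists>a\<in>set L. (a, u) \<in> (edge_rel ({e \<in> sH s. x \<notin> e} \<union> tree_edges L))\<^sup>*)
                              then Min (sid s ` set L) else sid s u)"
    and "sw s' = (if nbrs (sH s) x = {} then sw s else (sw s)(r := sw s r + sw s x))"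
    by (rule step_unpack[OF st])
  define H where "H = sH s"
  define H0 where "H0 = {e \<in> H. x \<notin> e}"
  have fin: "finite H" and fe: "\<forall>e\<in>H. finite e" and A: "ACY H"
    and I: "\<forall>a b. {a,b} \<in> H \<longrightarrow> sid s a = sid s b" using inv unfolding dinv_def H_def by auto
  have sub: "H0 \<subseteq> H" unfolding H0_def by blast
  have H'': "sH s' = H0 \<union> tree_edges L" using H' unfolding H0_def H_def .
  have "finite H0" using fin sub by (rule finite_subset[rotated])
  hence f1: "finite (sH s')" unfolding H'' using finite_tree by blast
  have f2: "\<forall>e\<in>sH s'. finite e"
  proof
    fix e assume "e \<in> sH s'"
    hence "e \<in> H0 \<or> e \<in> tree_edges L" unfolding H'' by blast
    thus "finite e"
    proof
      assume "e \<in> H0" thus ?thesis using fe sub by blast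
    next
      assume "e \<in> tree_edges L" thus ?thesis using tree_mem by fastforce
    qed
  qed
  have "sepL H0 L" using sep_lemma[OF inv U L] unfolding H0_def H_def .
  hence f3: "ACY (sH s')" unfolding H'' using ACY_pres[OF ACY_mono[OF A sub] d] by blast
  have f4: "\<forall>a b. {a,b} \<in> sH s' \<longrightarrow> sid s' a = sid s' b"
  proof (intro allI impI)
    fix a b assume e: "{a,b} \<in> sH s'"
    define R where "R = (\<lambda>u. \<exists>c\<in>set L. (c,u) \<in> (edge_rel (sH s'))\<^sup>*)"
    have I'': "sid s' = (\<lambda>u. if R u then Min (sid s ` set L) else sid s u)"
      unfolding I' R_def H' ..
    have e2: "{b,a} \<in> sH s'" using e by (simp add: insert_commute)
    have Rab: "R a \<longleftrightarrow> R b"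
    proof
      assume "R a" then obtain c where "c \<in> set L" "(c,a) \<in> (edge_rel (sH s'))\<^sup>*" unfolding R_def by blast
      thus "R b" unfolding R_def using er_step[OF _ e] by blast
    next
      assume "R b" then obtain c where "c \<in> set L" "(c,b) \<in> (edge_rel (sH s'))\<^sup>*" unfolding R_def by blast
      thus "R a" unfolding R_def using er_step[OF _ e2] by blast
    qed
    show "sid s' a = sid s' b"
    proof (cases "R a")
      case True thus ?thesis using Rab unfolding I'' by simp
    next
      case False
      have "{a,b} \<notin> tree_edges L"
      proof
        assume "{a,b} \<in> tree_edges L"
        hence "a \<in> set L" using tree_sub by (meson)
        hence "R a" unfolding R_def by blast
        thus False using False by blast
      qed
      hence "{a,b} \<in> H0" using e unfolding H'' by blast
      hence "{a,b} \<in> H" using sub by blast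
      hence "sid s a = sid s b" using I by blast
      thus ?thesis using Rab False unfolding I'' by simp
    qed
  qed
  show ?thesis unfolding dinv_def using f1 f2 f3 f4 by blast
qed

lemma dinv_init: "dinv (init_state V0 E0 iid)"
  by (simp add: dinv_def init_state_def ACY_def)

lemma dinv_reach:
  assumes "(dash_round E0 iid)\<^sup>*\<^sup>* (init_state V0 E0 iid) s"
  shows "dinv s"
  using assms
proof (induction rule: rtranclp_induct)
  case base thus ?case by (rule dinv_init)
next
  case (step y z)
  then obtain x where "dash_step E0 iid y x z" unfolding dash_round_def by blast
  thus ?case by (rule dinv_step[OF step.IH])
qed


lemma Max0_in: "finite A \<Longrightarrow> Max (insert (0::nat) (f ` A)) = 0 \<or> (\<exists>u\<in>A. Max (insert 0 (f ` A)) = f u)"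
proof -
  assume "finite A"
  hence "Max (insert (0::nat) (f ` A)) \<in> insert 0 (f ` A)" by (intro Max_in) auto
  thus ?thesis by blast
qed

lemma Max0_ge: "finite A \<Longrightarrow> u \<in> A \<Longrightarrow> (f u::nat) \<le> Max (insert 0 (f ` A))"
  by (rule Max_ge) auto

lemma Max0_le_sum: "finite A \<Longrightarrow> Max (insert (0::nat) (f ` A)) \<le> sum f A"
proof -
  assume fA: "finite A"
  from Max0_in[OF fA, of f] show ?thesis
  proof
    assume "Max (insert 0 (f ` A)) = 0" thus ?thesis by simp
  next
    assume "\<exists>u\<in>A. Max (insert 0 (f ` A)) = f u"
    then obtain u where "u \<in> A" "Max (insert 0 (f ` A)) = f u" by blast
    thus ?thesis using member_le_sum[of u A f] fA by simp
  qed
qed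

lemma rem_ineq:
  fixes a b :: "'a \<Rightarrow> nat" and N N' G :: "'a set" and w w' :: nat
  assumes fN: "finite N" and fN': "finite N'" and GN: "G \<subseteq> N" and GN': "G \<subseteq> N'"
    and ab: "\<forall>u\<in>G. a u \<le> b u" and ww: "w \<le> w'"
    and one: "\<forall>u\<in>N-G. \<forall>u'\<in>N-G. u = u'"
    and F1: "(\<Sum>u\<in>N-G. a u) + w \<le> (\<Sum>k\<in>N'-G. b k) + w'"
  shows "sum a N - Max (insert 0 (a ` N)) + w \<le> sum b N' - Max (insert 0 (b ` N')) + w'"
proof -
  define M where "M = Max (insert 0 (a ` N))"
  define M' where "M' = Max (insert 0 (b ` N'))"
  have M1: "M \<le> sum a N" unfolding M_def by (rule Max0_le_sum[OF fN])
  have M2: "M' \<le> sum b N'" unfolding M'_def by (rule Max0_le_sum[OF fN'])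
  have aM: "\<And>u. u \<in> N \<Longrightarrow> a u \<le> M" unfolding M_def by (rule Max0_ge[OF fN])
  have fG: "finite G" using GN fN by (rule finite_subset)
  have sa: "sum a N = sum a (N - G) + sum a G" using sum.subset_diff[OF GN fN] .
  have sb: "sum b N' = sum b (N' - G) + sum b G" using sum.subset_diff[OF GN' fN'] .
  have sab: "sum a G \<le> sum b G" using ab by (intro sum_mono) blast
  have NG: "sum a (N - G) \<le> M"
  proof (cases "N - G = {}")
    case True
    hence "sum a (N - G) = 0" by (simp only: sum.empty)
    thus ?thesis by simp
  next
    case False
    then obtain u0 where u0: "u0 \<in> N - G" by blast
    hence "N - G = {u0}" using one by blast
    moreover have "a u0 \<le> M" using aM u0 by blast
    ultimately show ?thesis by simp
  qed
  have key: "sum a N + w + M' \<le> sum b N' + w' + M"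
  proof -
    from Max0_in[OF fN', of b] have "M' = 0 \<or> (\<exists>k\<in>N'. M' = b k)" unfolding M'_def .
    thus ?thesis
    proof (elim disjE bexE)
      assume "M' = 0" thus ?thesis using sa sb sab F1 by linarith
    next
      fix k assume k: "k \<in> N'" and Mk: "M' = b k"
      show ?thesis
      proof (cases "k \<in> G")
        case True
        have fG': "finite G" by (rule fG)
        have "sum a G = a k + sum a (G - {k})" using sum.remove[OF fG True] .
        moreover have "sum b G = b k + sum b (G - {k})" using sum.remove[OF fG True] .
        moreover have "sum a (G - {k}) \<le> sum b (G - {k})" using ab by (intro sum_mono) blast
        moreover have "a k \<le> M" using aM True GN by blast
        ultimately show ?thesis using sa sb F1 Mk by linarith
      next
        case False
        hence "k \<in> N' - G" using k by blast
        hence "b k \<le> sum b (N' - G)" using fN' by (intro member_le_sum) auto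
        thus ?thesis using sa sb sab NG ww Mk by linarith
      qed
    qed
  qed
  show ?thesis using key M1 M2 unfolding M_def[symmetric] M'_def[symmetric] by linarith
qed


lemma sum_UN_le_nat:
  fixes f :: "'b \<Rightarrow> nat"
  assumes "finite K" "\<forall>k\<in>K. finite (T k)"
  shows "sum f (\<Union>k\<in>K. T k) \<le> (\<Sum>k\<in>K. sum f (T k))"
  using assms
proof (induction K rule: finite_induct)
  case empty thus ?case by simp
next
  case (insert k K)
  have fk: "finite (T k)" and fU: "finite (\<Union>k\<in>K. T k)" using insert by auto
  have "sum f (\<Union>j\<in>insert k K. T j) = sum f (T k \<union> (\<Union>j\<in>K. T j))" by simp
  also have "\<dots> \<le> sum f (T k) + sum f (\<Union>j\<in>K. T j)" using sum_Un_nat[OF fk fU, of f] by linarith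
  also have "\<dots> \<le> sum f (T k) + (\<Sum>j\<in>K. sum f (T j))" using insert by simp
  also have "\<dots> = (\<Sum>j\<in>insert k K. sum f (T j))" using insert by simp
  finally show ?case .
qed

lemma T_fin:
  assumes "finite H" "\<forall>e\<in>H. finite e"
  shows "finite {y. (u,y) \<in> (Rel H P)\<^sup>*}"
proof -
  have "{y. (u,y) \<in> (Rel H P)\<^sup>*} \<subseteq> insert u (\<Union>H)"
  proof
    fix y assume "y \<in> {y. (u,y) \<in> (Rel H P)\<^sup>*}"
    hence "y = u \<or> y \<in> \<Union>H" using reach_subset[of u y H P] by simp
    thus "y \<in> insert u (\<Union>H)" by (rule disjE) simp_all
  qed
  moreover have "finite (insert u (\<Union>H))" using assms by auto
  ultimately show ?thesis by (rule finite_subset)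
qed

lemma avoid_x:
  assumes "(u,y) \<in> (Rel H P)\<^sup>*" "\<forall>z. (u,z) \<in> (Rel H P)\<^sup>* \<longrightarrow> z \<noteq> x"
  shows "(u,y) \<in> (Rel {e\<in>H. x \<notin> e} P)\<^sup>*"
  using assms(1)
proof (induction rule: rtrancl_induct)
  case base thus ?case by simp
next
  case (step b c)
  have "b \<noteq> x" "c \<noteq> x" using assms(2) step(1) rtrancl_into_rtrancl[OF step(1) step(2)] by blast+
  hence "x \<notin> {b,c}" by simp
  hence "(b,c) \<in> Rel {e\<in>H. x \<notin> e} P" using step(2) unfolding Rel_def by simp
  thus ?case by (rule rtrancl_into_rtrancl[OF step(3)])
qed

lemma Rel_H0:
  assumes "(p,q) \<in> (Rel H (\<lambda>a. a \<noteq> v \<and> a \<noteq> x))\<^sup>*"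
  shows "(p,q) \<in> (Rel ({e\<in>H. x \<notin> e} \<union> T) (\<lambda>a. a \<noteq> v))\<^sup>*"
proof -
  have "Rel H (\<lambda>a. a \<noteq> v \<and> a \<noteq> x) \<subseteq> Rel ({e\<in>H. x \<notin> e} \<union> T) (\<lambda>a. a \<noteq> v)"
  proof
    fix z assume "z \<in> Rel H (\<lambda>a. a \<noteq> v \<and> a \<noteq> x)"
    then obtain a b where z: "z = (a,b)" "{a,b} \<in> H" "a \<noteq> v" "b \<noteq> v" "a \<noteq> x" "b \<noteq> x" unfolding Rel_def by blast
    have "x \<notin> {a,b}" using z by simp
    thus "z \<in> Rel ({e\<in>H. x \<notin> e} \<union> T) (\<lambda>a. a \<noteq> v)" using z unfolding Rel_def by simp
  qed
  thus ?thesis using assms rtrancl_mono by blast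
qed

lemma TE_Rel:
  assumes "v \<notin> set L" "(p,q) \<in> (edge_rel (tree_edges L))\<^sup>*"
  shows "(p,q) \<in> (Rel (E \<union> tree_edges L) (\<lambda>a. a \<noteq> v))\<^sup>*"
proof -
  have "edge_rel (tree_edges L) \<subseteq> Rel (E \<union> tree_edges L) (\<lambda>a. a \<noteq> v)"
  proof
    fix z assume "z \<in> edge_rel (tree_edges L)"
    then obtain a b where z: "z = (a,b)" "{a,b} \<in> tree_edges L" unfolding edge_rel_def by blast
    have "a \<in> set L \<and> b \<in> set L" using z(2) by (rule tree_sub)
    hence "a \<noteq> v" "b \<noteq> v" using assms(1) by auto
    thus "z \<in> Rel (E \<union> tree_edges L) (\<lambda>a. a \<noteq> v)" using z unfolding Rel_def by simp
  qed
  thus ?thesis using assms(2) rtrancl_mono by blast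
qed

lemma Wt_mono2:
  assumes "finite B" "A \<subseteq> B" "\<forall>y. sw s y \<le> sw s' y"
  shows "Wt s A \<le> Wt s' B"
proof -
  have "Wt s A \<le> Wt s' A" unfolding Wt_def using assms(3) by (intro sum_mono) blast
  also have "\<dots> \<le> Wt s' B" unfolding Wt_def using assms(1,2) by (intro sum_mono2) auto
  finally show ?thesis .
qed

lemma Wt_bonus:
  assumes "finite B" "A \<subseteq> B" "\<forall>y. sw s y \<le> sw s' y" "r \<in> A" "sw s' r = sw s r + c"
  shows "Wt s A + c \<le> Wt s' B"
proof -
  have fA: "finite A" using assms(1,2) by (rule finite_subset[rotated])
  have "Wt s A + c = sw s r + c + Wt s (A - {r})" unfolding Wt_def using sum.remove[OF fA assms(4)] by simp
  also have "\<dots> \<le> sw s' r + Wt s' (A - {r})" unfolding Wt_def using assms(3,5) by (simp add: sum_mono)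
  also have "\<dots> = Wt s' A" unfolding Wt_def using sum.remove[OF fA assms(4), of "sw s'"] by simp
  also have "\<dots> \<le> Wt s' B" unfolding Wt_def using assms(1,2) by (intro sum_mono2) auto
  finally show ?thesis .
qed

lemma Wt_split: "finite A \<Longrightarrow> x \<in> A \<Longrightarrow> Wt s A = sw s x + Wt s (A - {x})"
  unfolding Wt_def by (rule sum.remove)


lemma rem_mono:
  assumes inv: "dinv s" and st: "dash_step E0 iid s x s'" and vx: "v \<noteq> x"
  shows "rem s v \<le> rem s' v"
proof -
  obtain U L r where U: "is_UN iid s x U" and d: "distinct L" and L0: "set L = U \<union> nbrs (sH s) x"
    and r0: "nbrs (sH s) x \<noteq> {} \<longrightarrow> r \<in> nbrs (sH s) x"
    and H'0: "sH s' = {e \<in> sH s. x \<notin> e} \<union> tree_edges L"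
    and "sid s' = (\<lambda>u. if (\<exists>a\<in>set L. (a, u) \<in> (edge_rel ({e \<in> sH s. x \<notin> e} \<union> tree_edges L))\<^sup>*)
                              then Min (sid s ` set L) else sid s u)"
    and W0: "sw s' = (if nbrs (sH s) x = {} then sw s else (sw s)(r := sw s r + sw s x))"
    by (rule step_unpack[OF st])
  have inv': "dinv s'" by (rule dinv_step[OF inv st])
  define H where "H = sH s"
  define H0 where "H0 = {e \<in> H. x \<notin> e}"
  define TE where "TE = tree_edges L"
  have H': "sH s' = H0 \<union> TE" unfolding H0_def H_def TE_def H'0 ..
  have L: "set L = U \<union> nbrs H x" unfolding H_def L0 ..
  define R where "R = Rel H (\<lambda>a. a \<noteq> v)"
  define R' where "R' = Rel (H0 \<union> TE) (\<lambda>a. a \<noteq> v)"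
  have Teq: "\<And>u. T_comp s u v = {y. (u,y) \<in> R\<^sup>*}" unfolding R_def H_def by (rule T_comp_eq)
  have Teq': "\<And>u. T_comp s' u v = {y. (u,y) \<in> R'\<^sup>*}" unfolding R'_def H'[symmetric] by (rule T_comp_eq)
  have fin: "finite H" and fe: "\<forall>e\<in>H. finite e" and A: "ACY H"
    and I: "\<forall>a b. {a,b} \<in> H \<longrightarrow> sid s a = sid s b" using inv unfolding dinv_def H_def by auto
  have fin': "finite (H0 \<union> TE)" and fe': "\<forall>e\<in>H0 \<union> TE. finite e" using inv' unfolding dinv_def H' by auto
  have finT: "\<And>u. finite (T_comp s u v)" unfolding Teq R_def using T_fin[OF fin fe] .
  have finT': "\<And>u. finite (T_comp s' u v)" unfolding Teq' R'_def using T_fin[OF fin' fe'] .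
  have swge: "\<forall>y. sw s y \<le> sw s' y" unfolding W0 by auto
  have swr: "nbrs H x \<noteq> {} \<Longrightarrow> r \<in> nbrs H x \<and> sw s' r = sw s r + sw s x"
    using r0 unfolding W0 H_def by simp
  have Usid: "\<And>u. u \<in> U \<Longrightarrow> sid s u \<noteq> sid s x" using U unfolding is_UN_def by blast
  have Rconst: "\<And>p q. (p,q) \<in> R\<^sup>* \<Longrightarrow> sid s p = sid s q" unfolding R_def using path_const[OF I] by blast
  have Isym: "\<And>a b. {a,b} \<in> H \<Longrightarrow> sid s a = sid s b" using I by blast
  have RR': "\<And>p q. (p,q) \<in> (Rel H (\<lambda>a. a \<noteq> v \<and> a \<noteq> x))\<^sup>* \<Longrightarrow> (p,q) \<in> R'\<^sup>*"
    unfolding R'_def H0_def by (rule Rel_H0)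
  define N where "N = nbrs H v"
  define N' where "N' = nbrs (H0 \<union> TE) v"
  have nbrs_fin: "\<And>F. finite F \<Longrightarrow> \<forall>e\<in>F. finite e \<Longrightarrow> finite (nbrs F v)"
  proof -
    fix F :: "'a set set" assume "finite F" "\<forall>e\<in>F. finite e"
    hence "finite (\<Union>F)" by blast
    moreover have "nbrs F v \<subseteq> \<Union>F" unfolding nbrs_def by blast
    ultimately show "finite (nbrs F v)" by (rule finite_subset[rotated])
  qed
  have fN: "finite N" unfolding N_def using nbrs_fin[OF fin fe] .
  have fN': "finite N'" unfolding N'_def using nbrs_fin[OF fin' fe'] .
  define G where "G = {u \<in> N. x \<notin> T_comp s u v}"
  have GN: "G \<subseteq> N" unfolding G_def by blast
  have GN': "G \<subseteq> N'"
  proof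
    fix u assume "u \<in> G"
    hence u: "{v,u} \<in> H" "u \<noteq> v" "x \<notin> T_comp s u v" unfolding G_def N_def by (auto simp: nbrs_iff)
    have "u \<in> T_comp s u v" unfolding Teq by simp
    hence "u \<noteq> x" using u(3) by blast
    hence "x \<notin> {v,u}" using vx by simp
    hence "{v,u} \<in> H0" using u(1) unfolding H0_def by simp
    thus "u \<in> N'" unfolding N'_def using u(2) by (simp add: nbrs_iff)
  qed
  have ab: "\<forall>u\<in>G. Wt s (T_comp s u v) \<le> Wt s' (T_comp s' u v)"
  proof
    fix u assume "u \<in> G"
    hence ux: "x \<notin> T_comp s u v" unfolding G_def by blast
    have "T_comp s u v \<subseteq> T_comp s' u v"
    proof
      fix y assume "y \<in> T_comp s u v"
      hence "(u,y) \<in> (Rel H (\<lambda>a. a \<noteq> v))\<^sup>*" unfolding Teq R_def by simp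
      moreover have "\<forall>z. (u,z) \<in> (Rel H (\<lambda>a. a \<noteq> v))\<^sup>* \<longrightarrow> z \<noteq> x" using ux unfolding Teq R_def by blast
      ultimately have "(u,y) \<in> (Rel H0 (\<lambda>a. a \<noteq> v))\<^sup>*" unfolding H0_def by (rule avoid_x)
      hence "(u,y) \<in> R'\<^sup>*" unfolding R'_def by (rule Rel_mono2) auto
      thus "y \<in> T_comp s' u v" unfolding Teq' by simp
    qed
    thus "Wt s (T_comp s u v) \<le> Wt s' (T_comp s' u v)" using Wt_mono2[OF finT' _ swge] by blast
  qed
  have ww: "sw s v \<le> sw s' v" using swge by blast
  have one: "\<forall>u\<in>N-G. \<forall>u'\<in>N-G. u = u'"
  proof (intro ballI)
    fix u u' assume "u \<in> N - G" "u' \<in> N - G"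
    hence u: "{v,u} \<in> H" "(u,x) \<in> R\<^sup>*" and u': "{v,u'} \<in> H" "(u',x) \<in> R\<^sup>*"
      unfolding G_def N_def Teq by (auto simp: nbrs_iff)
    have "(x,u') \<in> R\<^sup>*" using u'(2) unfolding R_def by (rule Rel_sym)
    hence "(u,u') \<in> R\<^sup>*" using u(2) by (meson rtrancl_trans)
    thus "u = u'" using FOR[OF A u(1) u'(1)] unfolding R_def by blast
  qed
  have F1: "(\<Sum>u\<in>N-G. Wt s (T_comp s u v)) + sw s v \<le> (\<Sum>k\<in>N'-G. Wt s' (T_comp s' k v)) + sw s' v"
  proof (cases "N - G = {}")
    case True
    hence "(\<Sum>u\<in>N-G. Wt s (T_comp s u v)) = 0" by (simp only: sum.empty)
    thus ?thesis using ww by linarith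
  next
    case False
    then obtain u0 where u0: "u0 \<in> N - G" by blast
    hence NG: "N - G = {u0}" using one by blast
    have u0e: "{v,u0} \<in> H" "u0 \<noteq> v" "(u0,x) \<in> R\<^sup>*" using u0 unfolding G_def N_def Teq by (auto simp: nbrs_iff)
    have fNG': "finite (N' - G)" using fN' by simp
    have "Wt s (T_comp s u0 v) + sw s v \<le> (\<Sum>k\<in>N'-G. Wt s' (T_comp s' k v)) + sw s' v"
    proof (cases "u0 = x")
      case True
      have vxH: "{x,v} \<in> H" using u0e(1) True by (simp add: insert_commute)
      have vN: "v \<in> nbrs H x" using vxH vx by (simp add: nbrs_iff)
      hence vL: "v \<in> set L" using L by blast
      have rr: "r \<in> nbrs H x" "sw s' r = sw s r + sw s x" using swr vN by blast+
      define K where "K = {k. {k,v} \<in> TE \<and> k \<noteq> v}"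
      have KL: "K \<subseteq> set L" unfolding K_def TE_def using tree_sub by fastforce
      have fK: "finite K" using KL by (rule finite_subset) simp
      have KN: "K \<subseteq> N' - G"
      proof
        fix k assume "k \<in> K"
        hence k: "{k,v} \<in> TE" "k \<noteq> v" unfolding K_def by auto
        have kL: "k \<in> set L" using \<open>k \<in> K\<close> KL by blast
        have "k \<in> N'" unfolding N'_def using k by (simp add: nbrs_iff insert_commute)
        moreover have "k \<notin> N"
        proof
          assume "k \<in> N"
          hence vk: "{v,k} \<in> H" unfolding N_def by (simp add: nbrs_iff)
          have "k \<in> U \<or> k \<in> nbrs H x" using kL L by blast
          thus False
          proof
            assume kU: "k \<in> U"
            have "sid s k = sid s v" using Isym[OF vk] by simp
            also have "\<dots> = sid s x" using Isym[OF vxH] by simp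
            finally show False using Usid[OF kU] by contradiction
          next
            assume kx: "k \<in> nbrs H x"
            hence kxe: "{x,k} \<in> H" "k \<noteq> x" by (simp_all add: nbrs_iff)
            have "(v,k) \<in> Rel H (\<lambda>a. a \<noteq> x)" using vk kxe(2) vx unfolding Rel_def by simp
            hence "(v,k) \<in> (Rel H (\<lambda>a. a \<noteq> x))\<^sup>*" by blast
            hence "v = k" by (rule FOR[OF A vxH kxe(1)])
            thus False using k(2) by simp
          qed
        qed
        ultimately show "k \<in> N' - G" using GN by blast
      qed
      define Y where "Y = (\<Union>k\<in>K. T_comp s' k v)"
      have fY: "finite Y" unfolding Y_def using fK finT' by blast
      have sub: "T_comp s x v - {x} \<subseteq> Y"
      proof
        fix y assume "y \<in> T_comp s x v - {x}"
        hence y: "(x,y) \<in> R\<^sup>*" "y \<noteq> x" unfolding Teq by auto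
        have "(y,x) \<in> R\<^sup>*" using y(1) unfolding R_def by (rule Rel_sym)
        then obtain z where z: "{z,x} \<in> H" "z \<noteq> v" "z \<noteq> x" "(y,z) \<in> (Rel H (\<lambda>a. a \<noteq> v \<and> a \<noteq> x))\<^sup>*"
          using first_hit[of y x H "\<lambda>a. a \<noteq> v"] y(2) unfolding R_def by blast
        have "z \<in> nbrs H x" using z by (simp add: nbrs_iff insert_commute)
        hence zL: "z \<in> set L" using L by blast
        have "(z,v) \<in> (edge_rel TE)\<^sup>*" unfolding TE_def using tree_conn[OF zL vL] .
        hence "(z,v) \<in> (Rel TE (\<lambda>_. True))\<^sup>*" by (simp add: edge_rel_Rel)
        then obtain k where k: "{k,v} \<in> TE" "k \<noteq> v" "(z,k) \<in> (Rel TE (\<lambda>y. True \<and> y \<noteq> v))\<^sup>*"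
          using first_hit[of z v TE "\<lambda>_. True"] z(2) by blast
        have kK: "k \<in> K" unfolding K_def using k by simp
        have "(z,k) \<in> R'\<^sup>*" unfolding R'_def using k(3) by (rule Rel_mono2) auto
        moreover have "(y,z) \<in> R'\<^sup>*" using z(4) by (rule RR')
        ultimately have "(y,k) \<in> R'\<^sup>*" by (rule rtrancl_trans[rotated])
        hence "(k,y) \<in> R'\<^sup>*" unfolding R'_def by (rule Rel_sym)
        hence "y \<in> T_comp s' k v" unfolding Teq' by simp
        thus "y \<in> Y" unfolding Y_def using kK by blast
      qed
      have "\<forall>k\<in>K. finite (T_comp s' k v)" using finT' by blast
      hence sumY: "Wt s' Y \<le> (\<Sum>k\<in>K. Wt s' (T_comp s' k v))" unfolding Y_def Wt_def
        by (rule sum_UN_le_nat[OF fK])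
      have sumK: "(\<Sum>k\<in>K. Wt s' (T_comp s' k v)) \<le> (\<Sum>k\<in>N'-G. Wt s' (T_comp s' k v))"
        using KN fNG' by (intro sum_mono2) auto
      have xT: "x \<in> T_comp s x v" unfolding Teq by simp
      have split: "Wt s (T_comp s x v) = sw s x + Wt s (T_comp s x v - {x})" using Wt_split[OF finT xT] .
      show ?thesis
      proof (cases "r = v")
        case True
        have "sw s' v = sw s v + sw s x" using rr True by simp
        moreover have "Wt s (T_comp s x v - {x}) \<le> Wt s' Y" using Wt_mono2[OF fY sub swge] .
        ultimately show ?thesis unfolding \<open>u0 = x\<close> using split sumY sumK by linarith
      next
        case False
        have "{x,r} \<in> H" "r \<noteq> x" using rr(1) by (simp_all add: nbrs_iff)
        hence "(x,r) \<in> R" unfolding R_def Rel_def using vx False by simp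
        hence "r \<in> T_comp s x v - {x}" unfolding Teq using \<open>r \<noteq> x\<close> by auto
        hence "Wt s (T_comp s x v - {x}) + sw s x \<le> Wt s' Y" using Wt_bonus[OF fY sub swge _ rr(2)] by blast
        thus ?thesis unfolding \<open>u0 = x\<close> using split sumY sumK ww by linarith
      qed
    next
      case False
      have u0x: "u0 \<noteq> x" by (rule False)
      have "x \<notin> {v,u0}" using vx u0x by simp
      hence "{v,u0} \<in> H0" using u0e(1) unfolding H0_def by simp
      hence "u0 \<in> N'" unfolding N'_def using u0e(2) by (simp add: nbrs_iff)
      hence u0N': "u0 \<in> N' - G" using u0 by blast
      have vnx: "v \<notin> nbrs H x"
      proof
        assume "v \<in> nbrs H x"
        hence "{v,x} \<in> H" by (simp add: nbrs_iff insert_commute)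
        hence "x \<in> N" unfolding N_def using vx by (simp add: nbrs_iff)
        moreover have "x \<notin> G" unfolding G_def Teq by simp
        ultimately have "x \<in> N - G" by blast
        thus False using one u0 u0x by blast
      qed
      have vnU: "v \<notin> U"
      proof
        assume vU: "v \<in> U"
        have "sid s v = sid s u0" using Isym[OF u0e(1)] .
        also have "\<dots> = sid s x" using Rconst[OF u0e(3)] .
        finally show False using Usid[OF vU] by contradiction
      qed
      have vL: "v \<notin> set L" using L vnx vnU by blast
      obtain z1 where z1: "{z1,x} \<in> H" "z1 \<noteq> v" "z1 \<noteq> x" "(u0,z1) \<in> (Rel H (\<lambda>a. a \<noteq> v \<and> a \<noteq> x))\<^sup>*"
        using first_hit[of u0 x H "\<lambda>a. a \<noteq> v"] u0e(3) u0x unfolding R_def by blast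
      have z1N: "z1 \<in> nbrs H x" using z1 by (simp add: nbrs_iff insert_commute)
      hence ne: "nbrs H x \<noteq> {}" by blast
      have rr: "r \<in> nbrs H x" "sw s' r = sw s r + sw s x" using swr ne by blast+
      have "{x,r} \<in> H" "r \<noteq> x" using rr(1) by (simp_all add: nbrs_iff)
      moreover have "r \<noteq> v" using rr(1) vnx by blast
      ultimately have "(x,r) \<in> R" unfolding R_def Rel_def using vx by simp
      hence "(u0,r) \<in> R\<^sup>*" by (rule rtrancl_into_rtrancl[OF u0e(3)])
      hence rT: "r \<in> T_comp s u0 v - {x}" unfolding Teq using \<open>r \<noteq> x\<close> by auto
      have sub: "T_comp s u0 v - {x} \<subseteq> T_comp s' u0 v"
      proof
        fix y assume "y \<in> T_comp s u0 v - {x}"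
        hence y: "(u0,y) \<in> R\<^sup>*" "y \<noteq> x" unfolding Teq by auto
        have "(y,u0) \<in> R\<^sup>*" using y(1) unfolding R_def by (rule Rel_sym)
        hence "(y,x) \<in> R\<^sup>*" using u0e(3) by (rule rtrancl_trans)
        then obtain z2 where z2: "{z2,x} \<in> H" "z2 \<noteq> v" "z2 \<noteq> x" "(y,z2) \<in> (Rel H (\<lambda>a. a \<noteq> v \<and> a \<noteq> x))\<^sup>*"
          using first_hit[of y x H "\<lambda>a. a \<noteq> v"] y(2) unfolding R_def by blast
        have "z2 \<in> nbrs H x" using z2 by (simp add: nbrs_iff insert_commute)
        hence z2L: "z2 \<in> set L" using L by blast
        have z1L: "z1 \<in> set L" using z1N L by blast
        have "(z1,z2) \<in> (edge_rel (tree_edges L))\<^sup>*" using tree_conn[OF z1L z2L] .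
        hence "(z1,z2) \<in> (Rel (H0 \<union> tree_edges L) (\<lambda>a. a \<noteq> v))\<^sup>*" using TE_Rel[OF vL] by blast
        hence 2: "(z1,z2) \<in> R'\<^sup>*" unfolding R'_def TE_def .
        have 1: "(u0,z1) \<in> R'\<^sup>*" using z1(4) by (rule RR')
        have "(y,z2) \<in> R'\<^sup>*" using z2(4) by (rule RR')
        hence 3: "(z2,y) \<in> R'\<^sup>*" unfolding R'_def by (rule Rel_sym)
        have "(u0,y) \<in> R'\<^sup>*" using rtrancl_trans[OF rtrancl_trans[OF 1 2] 3] .
        thus "y \<in> T_comp s' u0 v" unfolding Teq' by simp
      qed
      have xT: "x \<in> T_comp s u0 v" unfolding Teq using u0e(3) by simp
      have "Wt s (T_comp s u0 v) = sw s x + Wt s (T_comp s u0 v - {x})" using Wt_split[OF finT xT] .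
      also have "\<dots> \<le> Wt s' (T_comp s' u0 v)" using Wt_bonus[OF finT' sub swge rT rr(2)] by simp
      also have "\<dots> \<le> (\<Sum>k\<in>N'-G. Wt s' (T_comp s' k v))" by (rule member_le_sum[OF u0N' _ fNG']) simp
      finally show ?thesis using ww by linarith
    qed
    thus ?thesis unfolding NG by simp
  qed
  have "(\<Sum>u\<in>N. Wt s (T_comp s u v)) - Max (insert 0 ((\<lambda>u. Wt s (T_comp s u v)) ` N)) + sw s v
     \<le> (\<Sum>u\<in>N'. Wt s' (T_comp s' u v)) - Max (insert 0 ((\<lambda>u. Wt s' (T_comp s' u v)) ` N')) + sw s' v"
    by (rule rem_ineq[OF fN fN' GN GN' ab ww one F1])
  thus ?thesis unfolding rem_def N_def N'_def H_def H' .
qed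


theorem lemma2:
  fixes V0 :: "'a set" and E0 :: "'a set set" and iid :: "'a \<Rightarrow> real"
    and s s' :: "'a dstate" and x v :: 'a
  assumes "finite V0"
    and "simple_graph V0 E0"
    and "connected_graph V0 E0"
    and "\<forall>u\<in>V0. 0 \<le> iid u \<and> iid u \<le> 1"
    and "(dash_round E0 iid)\<^sup>*\<^sup>* (init_state V0 E0 iid) s"
    and "dash_step E0 iid s x s'"
    and "v \<in> sV s" and "v \<noteq> x"
  shows "rem s v \<le> rem s' v"
  by (rule rem_mono[OF dinv_reach[OF assms(5)] assms(6) assms(8)])

end
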